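(* Let $\omega=e^{2\pi i/3}$, $\mathcal{E}=\mathbb{Z}[\omega]$, $\theta=\omega-\bar\omega$, and identify $\mathbb{C}^3$ with $\mathbb{R}^6$. Let $\Lambda_1,\dots,\Lambda_4\subset\mathbb{C}^3$ be the sets of $\mathcal{E}$-linear combinations of the rows of, respectively, $$\begin{bmatrix}\theta&0&0\\0&\theta&0\\0&0&\theta\end{bmatrix},\ \begin{bmatrix}1&1&1\\1&\omega&\bar\omega\\1&\bar\omega&\omega\end{bmatrix},\ \begin{bmatrix}1&1&\omega\\1&\omega&1\\1&\bar\omega&\bar\omega\end{bmatrix},\ \begin{bmatrix}1&1&\bar\omega\\1&\omega&\omega\\1&\bar\omega&1\end{bmatrix}$$ (each a copy of $\mathcal{E}^3\cong A_2^3$). Then $\Lambda_1\cap\Lambda_2\cap\Lambda_3\cap\Lambda_4$ is a lattice similar to $E_6^\ast$, the dual of the root lattice $E_6$.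
   Context: $\mathcal{E}$ is the ring of Eisenstein integers, which as a real 2-dimensional lattice is similar to the hexagonal lattice $A_2$. Two lattices are similar if one is mapped to the other by a linear map multiplying all inner products by a common positive constant. *)

theory Defs
  imports "HOL-Analysis.Analysis"
begin

definition omega :: complex where
  "omega = exp (2 * of_real pi * \<i> / 3)"

definition theta :: complex where
  "theta = omega - cnj omega"

definition eisenstein :: "complex set" where
  "eisenstein = {of_int m + of_int n * omega | m n. True}"

definition eis_span3 :: "complex^3 \<Rightarrow> complex^3 \<Rightarrow> complex^3 \<Rightarrow> (complex^3) set" where
  "eis_span3 r1 r2 r3 = {a *s r1 + b *s r2 + c *s r3 | a b c.
      a \<in> eisenstein \<and> b \<in> eisenstein \<and> c \<in> eisenstein}"

definition Lambda1 :: "(complex^3) set" where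
  "Lambda1 = eis_span3 (vector [theta, 0, 0]) (vector [0, theta, 0]) (vector [0, 0, theta])"

definition Lambda2 :: "(complex^3) set" where
  "Lambda2 = eis_span3 (vector [1, 1, 1]) (vector [1, omega, cnj omega]) (vector [1, cnj omega, omega])"

definition Lambda3 :: "(complex^3) set" where
  "Lambda3 = eis_span3 (vector [1, 1, omega]) (vector [1, omega, 1]) (vector [1, cnj omega, cnj omega])"

definition Lambda4 :: "(complex^3) set" where
  "Lambda4 = eis_span3 (vector [1, 1, cnj omega]) (vector [1, omega, omega]) (vector [1, cnj omega, 1])"

definition E8 :: "(real^8) set" where
  "E8 = {x. ((\<forall>i. x$i \<in> \<int>) \<or> (\<forall>i. x$i + 1/2 \<in> \<int>)) \<and>
            (\<exists>k::int. (\<Sum>i\<in>UNIV. x$i) = 2 * of_int k)}"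

text \<open>The hyperplane section V = {x5 = x6 = x7} (indices of the numeral type 8 are 0..7, i.e. the last three coordinates) of R^8, containing E6.\<close>
definition E6_space :: "(real^8) set" where
  "E6_space = {x. x$5 = x$6 \<and> x$6 = x$7}"

text \<open>Root lattice E6 = vectors of E8 orthogonal to the A2 spanned by the last three coordinates e5-e6, e6-e7.\<close>
definition E6 :: "(real^8) set" where
  "E6 = E8 \<inter> E6_space"

definition E6_dual :: "(real^8) set" where
  "E6_dual = {y \<in> E6_space. \<forall>x\<in>E6. inner y x \<in> \<int>}"

text \<open>A set L (in C^3 = R^6 with the standard real inner product Re(sum x_i conj y_i))
  is similar to E6*: the image of E6* under a real-linear map which multiplies all inner
  products by a common positive constant.\<close>
definition similar_to_E6_dual :: "(complex^3) set \<Rightarrow> bool" where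
  "similar_to_E6_dual L \<longleftrightarrow> (\<exists>f :: real^8 \<Rightarrow> complex^3. \<exists>c::real. linear f \<and> c > 0 \<and>
      (\<forall>x\<in>E6_space. \<forall>y\<in>E6_space. inner (f x) (f y) = c * inner x y) \<and>
      f ` E6_dual = L)"

end

theory Submission
  imports Defs
begin

lemma omega_eq: "omega = Complex (-1/2) (sqrt 3 / 2)"
proof -
  have e: "2 * complex_of_real pi * \<i> / 3 = Complex 0 (pi * 2 / 3)"
    by (simp add: complex_eq_iff)
  have "omega = exp (Complex 0 (pi * 2 / 3))"
    unfolding omega_def e ..
  also have "\<dots> = cis (pi * 2 / 3)" by (simp add: exp_eq_polar)
  also have "\<dots> = Complex (-1/2) (sqrt 3 / 2)" by (simp add: complex_eq_iff cos_120' sin_120')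
  finally show ?thesis .
qed
lemma exhaust_8: fixes x :: 8 shows "x = 0 \<or> x = 1 \<or> x = 2 \<or> x = 3 \<or> x = 4 \<or> x = 5 \<or> x = 6 \<or> x = 7"
proof (induct x)
  case (of_int z)
  then have "z = 0 \<or> z = 1 \<or> z = 2 \<or> z = 3 \<or> z = 4 \<or> z = 5 \<or> z = 6 \<or> z = 7" by fastforce
  then show ?case by auto
qed
lemma UNIV_8: "(UNIV::8 set) = {0,1,2,3,4,5,6,7}" using exhaust_8 by auto
lemma sum_8: "sum f (UNIV::8 set) = f 0 + f 1 + f 2 + f 3 + f 4 + f 5 + f 6 + f 7"
  unfolding UNIV_8 by (simp add: ac_simps)



lemma cnj_omega: "cnj omega = -1 - omega" by (simp add: omega_eq complex_eq_iff)
lemma theta_eq: "theta = 2 * omega + 1" unfolding theta_def cnj_omega by simp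
lemma omega_sq: "omega^2 + omega + 1 = 0"
  by (simp add: omega_eq complex_eq_iff power2_eq_square)
lemma theta_sq: "theta * theta = -3"
proof -
  have "theta * theta = 4 * (omega^2 + omega + 1) - 3" unfolding theta_eq by (simp add: algebra_simps power2_eq_square)
  then show ?thesis using omega_sq by simp
qed
lemma theta_nz: "theta \<noteq> 0" using theta_sq by auto

definition th :: "real \<Rightarrow> real \<Rightarrow> complex" where
  "th a b = theta * (of_real a + of_real b * omega)"

lemma th_eq: "th a b = Complex (-3*b/2) (sqrt 3 * (a - b/2))"
  by (simp add: th_def theta_eq omega_eq complex_eq_iff algebra_simps)

lemma th_add: "th a b + th c d = th (a+c) (b+d)"
  by (simp add: th_def algebra_simps)
lemma th_scale: "r *\<^sub>R th a b = th (r*a) (r*b)"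
  by (simp add: th_def scaleR_conv_of_real algebra_simps)
lemma inner_th: "inner (th a b) (th c d) = 3*(a*c - (a*d + b*c)/2 + b*d)"
  by (simp add: th_eq inner_complex_def algebra_simps)

definition "k1 (y::real^8) = y$0 - y$1"
definition "k2 (y::real^8) = y$1 - y$2"
definition "k3 (y::real^8) = y$2 - y$3"
definition "k4 (y::real^8) = y$3 - y$4"
definition "k5 (y::real^8) = y$3 + y$4"
definition "k6 (y::real^8) = (y$0+y$1+y$2+y$3+y$4+y$5+y$6+y$7)/2"

definition ff :: "real^8 \<Rightarrow> complex^3" where
 "ff y = vector [th (-k1 y) (-k1 y - k2 y - k3 y - k4 y - k5 y + k6 y),
                 th (-k1 y - 2*k2 y - 2*k3 y - k4 y - k5 y) (k3 y + k5 y - k6 y),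
                 th (k3 y + k4 y + k5 y) (k3 y + k4 y)]"

lemma ff_linear: "linear ff"
proof (rule linearI)
  fix x y :: "real^8"
  show "ff (x + y) = ff x + ff y"
    unfolding vec_eq_iff forall_3
    by (simp add: ff_def th_add k1_def k2_def k3_def k4_def k5_def k6_def algebra_simps add_divide_distrib)
next
  fix r and x :: "real^8"
  show "ff (r *\<^sub>R x) = r *\<^sub>R ff x"
    unfolding vec_eq_iff forall_3
    by (simp add: ff_def th_scale k1_def k2_def k3_def k4_def k5_def k6_def algebra_simps)
qed

lemma ff_inner:
  assumes "x \<in> E6_space" "y \<in> E6_space"
  shows "inner (ff x) (ff y) = 9/2 * inner x y"
proof -
  have e: "x$6 = x$5" "x$7 = x$5" "y$6 = y$5" "y$7 = y$5" using assms by (auto simp: E6_space_def)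
  show ?thesis
    unfolding inner_vec_def sum_3 sum_8 ff_def vector_3 inner_th
     k1_def k2_def k3_def k4_def k5_def k6_def e inner_real_def
    by (simp add: field_simps)
qed




lemma inner8: "inner (x::real^8) y = x$0*y$0 + x$1*y$1 + x$2*y$2 + x$3*y$3 + x$4*y$4 + x$5*y$5 + x$6*y$6 + x$7*y$7"
  by (simp add: inner_vec_def sum_8)

definition "r1 = (\<chi> i::8. if i = 0 then 1 else if i = 1 then -1 else (0::real))"
definition "r2 = (\<chi> i::8. if i = 1 then 1 else if i = 2 then -1 else (0::real))"
definition "r3 = (\<chi> i::8. if i = 2 then 1 else if i = 3 then -1 else (0::real))"
definition "r4 = (\<chi> i::8. if i = 3 then 1 else if i = 4 then -1 else (0::real))"
definition "r5 = (\<chi> i::8. if i = 3 then 1 else if i = 4 then 1 else (0::real))"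
definition "r6 = (\<chi> i::8. (1/2::real))"

lemma Ints_if: "a \<in> \<int> \<Longrightarrow> b \<in> \<int> \<Longrightarrow> c \<in> \<int> \<Longrightarrow> (if P then a else if Q then b else c) \<in> \<int>"
  by auto

lemma r_E6: "r1 \<in> E6" "r2 \<in> E6" "r3 \<in> E6" "r4 \<in> E6" "r5 \<in> E6" "r6 \<in> E6"
proof -
  have z: "(0::real) = 2 * of_int 0" "(2::real) = 2 * of_int 1" "(4::real) = 2 * of_int 2" by simp_all
  show "r1 \<in> E6" unfolding E6_def E8_def E6_space_def r1_def
    by (auto simp: sum_8 intro!: Ints_if exI[of _ 0])
  show "r2 \<in> E6" unfolding E6_def E8_def E6_space_def r2_def
    by (auto simp: sum_8 intro!: Ints_if exI[of _ 0])
  show "r3 \<in> E6" unfolding E6_def E8_def E6_space_def r3_def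
    by (auto simp: sum_8 intro!: Ints_if exI[of _ 0])
  show "r4 \<in> E6" unfolding E6_def E8_def E6_space_def r4_def
    by (auto simp: sum_8 intro!: Ints_if exI[of _ 0])
  show "r5 \<in> E6" unfolding E6_def E8_def E6_space_def r5_def
    by (auto simp: sum_8 intro!: Ints_if exI[of _ 1])
  have h: "(1/2::real) + 1/2 \<in> \<int>" by simp
  show "r6 \<in> E6" unfolding E6_def E8_def E6_space_def r6_def
    by (auto simp: sum_8 h intro!: exI[of _ 2])
qed

lemma inner_r: "inner y r1 = k1 y" "inner y r2 = k2 y" "inner y r3 = k3 y" "inner y r4 = k4 y"
   "inner y r5 = k5 y" "inner y r6 = k6 y"
  by (simp_all add: inner8 r1_def r2_def r3_def r4_def r5_def r6_def
      k1_def k2_def k3_def k4_def k5_def k6_def field_simps)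

lemma E6_int:
  assumes "x \<in> E6" "y \<in> E6_space" "k1 y \<in> \<int>" "k2 y \<in> \<int>" "k3 y \<in> \<int>" "k4 y \<in> \<int>" "k5 y \<in> \<int>" "k6 y \<in> \<int>"
  shows "inner y x \<in> \<int>"
proof -
  have ex: "x$6 = x$5" "x$7 = x$5" "y$6 = y$5" "y$7 = y$5" using assms(1,2) by (auto simp: E6_space_def E6_def)
  define c1 where "c1 = x$0 - x$5"
  define c2 where "c2 = x$0 + x$1 - 2*x$5"
  define c3 where "c3 = x$0 + x$1 + x$2 - 3*x$5"
  define c4 where "c4 = (x$0 + x$1 + x$2 + x$3 - x$4 - 3*x$5)/2"
  define c5 where "c5 = (x$0 + x$1 + x$2 + x$3 + x$4 - 5*x$5)/2"
  define c6 where "c6 = 2*x$5"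
  have eq: "inner y x = c1 * k1 y + c2 * k2 y + c3 * k3 y + c4 * k4 y + c5 * k5 y + c6 * k6 y"
    unfolding inner8 c1_def c2_def c3_def c4_def c5_def c6_def k1_def k2_def k3_def k4_def k5_def k6_def ex
    by (simp add: field_simps)
  from assms(1) obtain K :: int where K: "(\<Sum>i\<in>UNIV. x$i) = 2 * of_int K"
    and cs: "(\<forall>i. x$i \<in> \<int>) \<or> (\<forall>i. x$i + 1/2 \<in> \<int>)"
    unfolding E6_def E8_def by auto
  have S: "x$0 + x$1 + x$2 + x$3 + x$4 + 3 * x$5 = 2 * of_int K" using K by (simp add: sum_8 ex)
  have "c1 \<in> \<int> \<and> c2 \<in> \<int> \<and> c3 \<in> \<int> \<and> c4 \<in> \<int> \<and> c5 \<in> \<int> \<and> c6 \<in> \<int>"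
    using cs
  proof
    assume a: "\<forall>i. x$i \<in> \<int>"
    have "c4 = of_int K - x$4 - 3*x$5" "c5 = of_int K - 4*x$5" using S unfolding c4_def c5_def by simp_all
    then show ?thesis using a unfolding c1_def c2_def c3_def c6_def
      by (auto intro!: Ints_add Ints_diff Ints_mult)
  next
    assume a: "\<forall>i. x$i + 1/2 \<in> \<int>"
    define u0 where "u0 = x$0 + 1/2"
    define u1 where "u1 = x$1 + 1/2"
    define u2 where "u2 = x$2 + 1/2"
    define u4 where "u4 = x$4 + 1/2"
    define u5 where "u5 = x$5 + 1/2"
    have u: "u0 \<in> \<int>" "u1 \<in> \<int>" "u2 \<in> \<int>" "u4 \<in> \<int>" "u5 \<in> \<int>"
      using a unfolding u0_def u1_def u2_def u4_def u5_def by auto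
    have "c1 = u0 - u5" "c2 = u0 + u1 - 2*u5"
      "c3 = u0 + u1 + u2 - 3*u5"
      "c4 = of_int K - u4 - 3*u5 + 2" "c5 = of_int K - 4*u5 + 2"
      "c6 = 2 * u5 - 1"
      using S unfolding c1_def c2_def c3_def c4_def c5_def c6_def u0_def u1_def u2_def u4_def u5_def
      by (simp_all add: field_simps)
    then show ?thesis using u
      by (auto intro!: Ints_add Ints_diff Ints_mult)
  qed
  then show ?thesis unfolding eq using assms(3-8)
    by (auto intro!: Ints_add Ints_mult)
qed

lemma dual_char: "E6_dual = {y. y \<in> E6_space \<and> k1 y \<in> \<int> \<and> k2 y \<in> \<int> \<and> k3 y \<in> \<int> \<and> k4 y \<in> \<int> \<and> k5 y \<in> \<int> \<and> k6 y \<in> \<int>}"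
proof safe
  fix y assume "y \<in> E6_dual"
  then have y: "y \<in> E6_space" "\<And>x. x \<in> E6 \<Longrightarrow> inner y x \<in> \<int>" unfolding E6_dual_def by auto
  show "y \<in> E6_space" by fact
  show "k1 y \<in> \<int>" using y(2)[OF r_E6(1)] inner_r by simp
  show "k2 y \<in> \<int>" using y(2)[OF r_E6(2)] inner_r by simp
  show "k3 y \<in> \<int>" using y(2)[OF r_E6(3)] inner_r by simp
  show "k4 y \<in> \<int>" using y(2)[OF r_E6(4)] inner_r by simp
  show "k5 y \<in> \<int>" using y(2)[OF r_E6(5)] inner_r by simp
  show "k6 y \<in> \<int>" using y(2)[OF r_E6(6)] inner_r by simp
next
  fix y assume "y \<in> E6_space" "k1 y \<in> \<int>" "k2 y \<in> \<int>" "k3 y \<in> \<int>" "k4 y \<in> \<int>" "k5 y \<in> \<int>" "k6 y \<in> \<int>"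
  then show "y \<in> E6_dual" unfolding E6_dual_def using E6_int by auto
qed




lemma eis_of_int: "of_int m \<in> eisenstein"
  unfolding eisenstein_def by (rule CollectI, rule exI[of _ m], rule exI[of _ 0]) simp
lemma eis_omega: "omega \<in> eisenstein"
  unfolding eisenstein_def by (rule CollectI, rule exI[of _ 0], rule exI[of _ 1]) simp
lemma eis_add: "a \<in> eisenstein \<Longrightarrow> b \<in> eisenstein \<Longrightarrow> a + b \<in> eisenstein"
  unfolding eisenstein_def
proof safe
  fix m n p q :: int
  show "\<exists>m' n'. of_int m + of_int n * omega + (of_int p + of_int q * omega) = of_int m' + of_int n' * omega \<and> True"
    by (rule exI[of _ "m+p"], rule exI[of _ "n+q"]) (simp add: algebra_simps)
qed
lemma eis_uminus: "a \<in> eisenstein \<Longrightarrow> - a \<in> eisenstein"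
  unfolding eisenstein_def
proof safe
  fix m n :: int
  show "\<exists>m' n'. - (of_int m + of_int n * omega) = of_int m' + of_int n' * omega \<and> True"
    by (rule exI[of _ "-m"], rule exI[of _ "-n"]) (simp add: algebra_simps)
qed
lemma eis_diff: "a \<in> eisenstein \<Longrightarrow> b \<in> eisenstein \<Longrightarrow> a - b \<in> eisenstein"
  using eis_add[OF _ eis_uminus[of b], of a] by simp
lemma eis_mult: "a \<in> eisenstein \<Longrightarrow> b \<in> eisenstein \<Longrightarrow> a * b \<in> eisenstein"
  unfolding eisenstein_def
proof safe
  fix m n p q :: int
  have "(of_int m + of_int n * omega) * (of_int p + of_int q * omega) =
      of_int (m*p - n*q) + of_int (m*q + n*p - n*q) * omega"
    using omega_sq by (simp add: algebra_simps power2_eq_square) algebra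
  then show "\<exists>m' n'. (of_int m + of_int n * omega) * (of_int p + of_int q * omega) = of_int m' + of_int n' * omega \<and> True"
    by blast
qed

lemmas eis_closed = eis_of_int eis_omega eis_add eis_uminus eis_diff eis_mult

lemma Lam_in:
  assumes E: "y1 \<in> eisenstein" "y2 \<in> eisenstein" "y3 \<in> eisenstein" "s \<in> eisenstein"
    and hs: "y1 + y2 + y3 = theta * s"
  shows "vector [theta*y1, theta*y2, theta*y3] \<in> Lambda1 \<inter> Lambda2 \<inter> Lambda3 \<inter> Lambda4"
proof -
  have hs': "y1 + y2 + y3 = (2 * omega+1) * s" using hs theta_eq by simp
  note os = omega_sq[unfolded power2_eq_square]
  have "(vector [theta*y1, theta*y2, theta*y3] :: complex^3) = y1 *s vector [theta, 0, 0] + y2 *s vector [0, theta, 0] + y3 *s vector [0, 0, theta]"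
    unfolding vec_eq_iff forall_3 by (simp add: algebra_simps)
  then have 1: "vector [theta*y1, theta*y2, theta*y3] \<in> Lambda1"
    unfolding Lambda1_def eis_span3_def using E by blast
  have "(vector [theta*y1, theta*y2, theta*y3] :: complex^3) = (-s) *s vector [1, 1, 1] + (-(s + omega * y2 - omega * omega * y3)) *s vector [1, omega, cnj omega]
     + (-(s - omega * omega * y2 + omega * y3)) *s vector [1, cnj omega, omega]"
    unfolding vec_eq_iff unfolding forall_3 vector_3 vector_add_component vector_smult_component cnj_omega theta_eq
    using os hs' by (intro conjI; algebra)
  moreover have "-s \<in> eisenstein" "-(s + omega * y2 - omega * omega * y3) \<in> eisenstein" "-(s - omega * omega * y2 + omega * y3) \<in> eisenstein"
    using E by (auto intro!: eis_closed)
  ultimately have 2: "vector [theta*y1, theta*y2, theta*y3] \<in> Lambda2"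
    unfolding Lambda2_def eis_span3_def by blast
  define s' where "s' = s + omega * y3"
  define z3 where "z3 = omega * omega * y3"
  have "(vector [theta*y1, theta*y2, theta*y3] :: complex^3) = (-s') *s vector [1, 1, omega] + (-(s' + omega * y2 - omega * omega * z3)) *s vector [1, omega, 1]
     + (-(s' - omega * omega * y2 + omega * z3)) *s vector [1, cnj omega, cnj omega]"
    unfolding vec_eq_iff unfolding forall_3 vector_3 vector_add_component vector_smult_component cnj_omega theta_eq s'_def z3_def
    using os hs' by (intro conjI; algebra)
  moreover have "-s' \<in> eisenstein" "-(s' + omega * y2 - omega * omega * z3) \<in> eisenstein" "-(s' - omega * omega * y2 + omega * z3) \<in> eisenstein"
    using E unfolding s'_def z3_def by (auto intro!: eis_closed)
  ultimately have 3: "vector [theta*y1, theta*y2, theta*y3] \<in> Lambda3"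
    unfolding Lambda3_def eis_span3_def by blast
  define s'' where "s'' = s - omega * omega * y3"
  define w3 where "w3 = omega * y3"
  have "(vector [theta*y1, theta*y2, theta*y3] :: complex^3) = (-s'') *s vector [1, 1, cnj omega] + (-(s'' + omega * y2 - omega * omega * w3)) *s vector [1, omega, omega]
     + (-(s'' - omega * omega * y2 + omega * w3)) *s vector [1, cnj omega, 1]"
    unfolding vec_eq_iff unfolding forall_3 vector_3 vector_add_component vector_smult_component cnj_omega theta_eq s''_def w3_def
    using os hs' by (intro conjI; algebra)
  moreover have "-s'' \<in> eisenstein" "-(s'' + omega * y2 - omega * omega * w3) \<in> eisenstein" "-(s'' - omega * omega * y2 + omega * w3) \<in> eisenstein"
    using E unfolding s''_def w3_def by (auto intro!: eis_closed)
  ultimately have 4: "vector [theta*y1, theta*y2, theta*y3] \<in> Lambda4"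
    unfolding Lambda4_def eis_span3_def by blast
  from 1 2 3 4 show ?thesis by blast
qed

lemma Lam_out:
  assumes "x \<in> Lambda1" "x \<in> Lambda2"
  shows "\<exists>y1 y2 y3 s. y1 \<in> eisenstein \<and> y2 \<in> eisenstein \<and> y3 \<in> eisenstein \<and> s \<in> eisenstein \<and>
     y1 + y2 + y3 = theta * s \<and> x = vector [theta*y1, theta*y2, theta*y3]"
proof -
  obtain a b c where abc: "a \<in> eisenstein" "b \<in> eisenstein" "c \<in> eisenstein"
    and x: "x = a *s vector [theta, 0, 0] + b *s vector [0, theta, 0] + c *s vector [0, 0, theta]"
    using assms(1) unfolding Lambda1_def eis_span3_def by blast
  obtain a' b' c' where a': "a' \<in> eisenstein"
    and x': "x = a' *s vector [1, 1, 1] + b' *s vector [1, omega, cnj omega] + c' *s vector [1, cnj omega, omega]"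
    using assms(2) unfolding Lambda2_def eis_span3_def by blast
  have xv: "x = vector [theta*a, theta*b, theta*c]"
    unfolding x vec_eq_iff forall_3 by (simp add: algebra_simps)
  have "x$1 + x$2 + x$3 = 3 * a'"
    unfolding x' vector_3 vector_add_component vector_smult_component cnj_omega
    by (simp add: algebra_simps)
  moreover have "theta * (theta * (-a')) = 3 * a'"
  proof -
    have "theta * (theta * (-a')) = (theta * theta) * (-a')" by (simp only: mult.assoc)
    then show ?thesis by (simp add: theta_sq)
  qed
  ultimately have "theta * (a + b + c) = theta * (theta * (-a'))"
    unfolding xv by (simp add: algebra_simps)
  then have "a + b + c = theta * (-a')" using theta_nz mult_left_cancel by blast
  then show ?thesis using abc a' xv eis_uminus by blast
qed




lemma coord_unique:
  assumes "of_int a + of_int b * omega = (of_int c + of_int d * omega :: complex)"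
  shows "a = c \<and> b = d"
proof -
  from assms have "Im (of_int a + of_int b * omega) = Im (of_int c + of_int d * omega)"
    "Re (of_int a + of_int b * omega) = Re (of_int c + of_int d * omega)" by simp_all
  then have "of_int b * sqrt 3 / 2 = of_int d * sqrt 3 / 2" "of_int a - of_int b / 2 = (of_int c - of_int d / 2 :: real)"
    by (simp_all add: omega_eq)
  then have "real_of_int b = of_int d" "real_of_int a - of_int b / 2 = of_int c - of_int d / 2" by simp_all
  then show ?thesis by simp
qed

lemma theta_mul: "theta * (of_int p + of_int q * omega) = of_int (p - 2*q) + of_int (2*p - q) * omega"
  unfolding theta_eq of_int_diff of_int_mult using omega_sq[unfolded power2_eq_square] by simp algebra

lemma sum_lem:
  assumes "A + B = 3 * K"
  shows "of_int A + of_int B * omega = theta * (of_int (2*K - A) + of_int (K - A) * omega)"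
proof -
  have h: "of_int A + of_int B = (3::complex) * of_int K"
    using arg_cong[OF assms, of "of_int :: int \<Rightarrow> complex"] by simp
  show ?thesis
    unfolding theta_eq of_int_diff of_int_mult using omega_sq[unfolded power2_eq_square] h by simp algebra
qed

lemma eis_numeral: "numeral n \<in> eisenstein"
  using eis_of_int[of "numeral n"] by simp

lemma th_int: "a = of_int m \<Longrightarrow> b = of_int n \<Longrightarrow> th a b = theta * (of_int m + of_int n * omega)"
  by (simp add: th_def)

lemma eis_form: "z \<in> eisenstein \<Longrightarrow> \<exists>m n. z = of_int m + of_int n * omega"
  unfolding eisenstein_def by blast

theorem mainTheorem6:
  shows "similar_to_E6_dual (Lambda1 \<inter> Lambda2 \<inter> Lambda3 \<inter> Lambda4)"
  unfolding similar_to_E6_dual_def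
proof (intro exI[of _ ff] exI[of _ "9/2"] conjI ballI)
  show "linear ff" by (rule ff_linear)
  show "(0::real) < 9/2" by simp
  fix x y assume "x \<in> E6_space" "y \<in> E6_space"
  then show "inner (ff x) (ff y) = 9/2 * inner x y" by (rule ff_inner)
next
  show "ff ` E6_dual = Lambda1 \<inter> Lambda2 \<inter> Lambda3 \<inter> Lambda4"
  proof safe
    fix y assume "y \<in> E6_dual"
    then have "k1 y \<in> \<int>" "k2 y \<in> \<int>" "k3 y \<in> \<int>" "k4 y \<in> \<int>" "k5 y \<in> \<int>" "k6 y \<in> \<int>"
      unfolding dual_char by auto
    then obtain j1 j2 j3 j4 j5 j6 where j: "k1 y = of_int j1" "k2 y = of_int j2" "k3 y = of_int j3"
      "k4 y = of_int j4" "k5 y = of_int j5" "k6 y = of_int j6"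
      by (metis Ints_cases)
    define Y1 :: complex where "Y1 = of_int (-j1) + of_int (-j1-j2-j3-j4-j5+j6) * omega"
    define Y2 :: complex where "Y2 = of_int (-j1-2*j2-2*j3-j4-j5) + of_int (j3+j5-j6) * omega"
    define Y3 :: complex where "Y3 = of_int (j3+j4+j5) + of_int (j3+j4) * omega"
    have fy: "ff y = vector [theta * Y1, theta * Y2, theta * Y3]"
      unfolding ff_def Y1_def Y2_def Y3_def
      by (simp add: th_def j)
    have "(-2*j1-2*j2-j3) + (-j1+-j2+j3) = 3 * (-j1-j2)" by simp
    note sl = sum_lem[OF this]
    have "Y1 + Y2 + Y3 = of_int (-2*j1-2*j2-j3) + of_int (-j1+-j2+j3) * omega"
      unfolding Y1_def Y2_def Y3_def by (simp add: algebra_simps)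
    also note sl
    finally have "Y1 + Y2 + Y3 = theta * (of_int (2*(-j1-j2) - (-2*j1-2*j2-j3)) + of_int ((-j1-j2) - (-2*j1-2*j2-j3)) * omega)" .
    then have "vector [theta * Y1, theta * Y2, theta * Y3] \<in> Lambda1 \<inter> Lambda2 \<inter> Lambda3 \<inter> Lambda4"
      by (rule Lam_in[rotated 4]) (auto simp: Y1_def Y2_def Y3_def intro!: eis_closed eis_numeral)
    then show "ff y \<in> Lambda1" "ff y \<in> Lambda2" "ff y \<in> Lambda3" "ff y \<in> Lambda4" unfolding fy by auto
  next
    fix z assume z: "z \<in> Lambda1" "z \<in> Lambda2" "z \<in> Lambda3" "z \<in> Lambda4"
    then obtain y1 y2 y3 s where E: "y1 \<in> eisenstein" "y2 \<in> eisenstein" "y3 \<in> eisenstein" "s \<in> eisenstein"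
      and hs: "y1 + y2 + y3 = theta * s" and zv: "z = vector [theta * y1, theta * y2, theta * y3]"
      using Lam_out by blast
    obtain m1 n1 where y1: "y1 = of_int m1 + of_int n1 * omega" using eis_form[OF E(1)] by blast
    obtain m2 n2 where y2: "y2 = of_int m2 + of_int n2 * omega" using eis_form[OF E(2)] by blast
    obtain m3 n3 where y3: "y3 = of_int m3 + of_int n3 * omega" using eis_form[OF E(3)] by blast
    obtain p q where s: "s = of_int p + of_int q * omega" using eis_form[OF E(4)] by blast
    have "of_int (m1+m2+m3) + of_int (n1+n2+n3) * omega = (of_int (p - 2*q) + of_int (2*p - q) * omega :: complex)"
      using hs unfolding y1 y2 y3 s theta_mul by (simp add: algebra_simps)
    from coord_unique[OF this] have sm: "m1+m2+m3 = p - 2*q" "n1+n2+n3 = 2*p - q" by auto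
    define K where "K = p - q"
    define j1 where "j1 = -m1"
    define j2 where "j2 = m1 - K"
    define j3 where "j3 = -m1-m2-m3+2*K"
    define j4 where "j4 = n3 - j3"
    define j5 where "j5 = m3 - n3"
    define j6 where "j6 = n1 + m3 - K"
    define Y4 :: real where "Y4 = (of_int j5 - of_int j4)/2"
    define Y3 :: real where "Y3 = (of_int j4 + of_int j5)/2"
    define Y2 :: real where "Y2 = Y3 + of_int j3"
    define Y1 :: real where "Y1 = Y2 + of_int j2"
    define Y0 :: real where "Y0 = Y1 + of_int j1"
    define T :: real where "T = (2 * of_int j6 - (Y0+Y1+Y2+Y3+Y4))/3"
    define yy :: "real^8" where "yy = (\<chi> i. if i = 0 then Y0 else if i = 1 then Y1 else if i = 2 then Y2
       else if i = 3 then Y3 else if i = 4 then Y4 else T)"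
    have c: "yy$0 = Y0" "yy$1 = Y1" "yy$2 = Y2" "yy$3 = Y3" "yy$4 = Y4" "yy$5 = T" "yy$6 = T" "yy$7 = T"
      unfolding yy_def by simp_all
    have k: "k1 yy = of_int j1" "k2 yy = of_int j2" "k3 yy = of_int j3" "k4 yy = of_int j4"
       "k5 yy = of_int j5" "k6 yy = of_int j6"
      unfolding k1_def k2_def k3_def k4_def k5_def k6_def c
      by (simp_all add: Y0_def Y1_def Y2_def Y3_def Y4_def T_def field_simps)
    have "yy \<in> E6_dual" unfolding dual_char
      using c k by (simp add: E6_space_def)
    moreover
    have t1: "th (- of_int j1) (- of_int j1 - of_int j2 - of_int j3 - of_int j4 - of_int j5 + of_int j6) = theta * (of_int m1 + of_int n1 * omega)"
      by (rule th_int) (simp_all add: j1_def j2_def j3_def j4_def j5_def j6_def K_def)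
    have t2: "th (- of_int j1 - 2 * of_int j2 - 2 * of_int j3 - of_int j4 - of_int j5) (of_int j3 + of_int j5 - of_int j6) = theta * (of_int m2 + of_int n2 * omega)"
      by (rule th_int) (use sm in \<open>simp_all add: j1_def j2_def j3_def j4_def j5_def j6_def K_def\<close>)
    have t3: "th (of_int j3 + of_int j4 + of_int j5) (of_int j3 + of_int j4) = theta * (of_int m3 + of_int n3 * omega)"
      by (rule th_int) (simp_all add: j1_def j2_def j3_def j4_def j5_def j6_def K_def)
    have "ff yy = z"
      unfolding zv ff_def k y1 y2 y3 t1 t2 t3 ..
    moreover
    ultimately show "z \<in> ff ` E6_dual" by blast
  qed
qed


end
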